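(* For every $\alpha\in[0,2]$, \[ \max_{\mathbf z\in\mathcal Z} F_\alpha(\mathbf z)\;=\;\max_{\mathbf x\in\mathcal X}F_\alpha(\mathbf x), \] i.e. the integrality gap $f^{\mathrm{SO}}(\mathbf z^* )/f^{\mathrm{RSO}}(\mathbf x^* )$ between the SSA problem with optimal allocation and its relaxation equals $1$, where $F_\alpha$ is defined below.
   Context: $\mathcal U$ (users) and $\mathcal B$ (stations) are finite nonempty sets, with positive rates $r_{ub}$. $\mathcal Z=\{\mathbf z\in\mathbb Z_+^{|\mathcal U|\times|\mathcal B|}:\sum_b z_{ub}=1\ \forall u\}$ and its relaxation $\mathcal X=\{\mathbf x\in\mathbb R_+^{|\mathcal U|\times|\mathcal B|}:\sum_b x_{ub}=1\ \forall u\}$. For $\mathbf w\in\mathcal X$ (in particular $\mathbf w\in\mathcal Z$) define $F_0(\mathbf w)=\sum_{b}\max_{u} r_{ub}w_{ub}$; $F_1(\mathbf w)=\sum_{u,b} w_{ub}\big(\log r_{ub}-\log(1+\sum_{v\ne u} w_{vb})\big)$; and for $\alpha>0,\alpha\ne1$: $F_\alpha(\mathbf w)=\frac{1}{1-\alpha}\sum_{u,b} r_{ub}^{1-\alpha}w_{ub}\big(1+\sum_{v\ne u}(r_{vb}/r_{ub})^{(1-\alpha)/\alpha}w_{vb}\big)^{\alpha-1}$. $f^{\mathrm{SO}}=\max_{\mathbf z\in\mathcal Z}F_\alpha(\mathbf z)$ is the single-station association utility maximization problem with optimal station resource allocation (sum over users of $\alpha$-fair utility $U_\alpha(R)=R^{1-\alpha}/(1-\alpha)$,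 $U_1=\log$, of downlink rates), and $f^{\mathrm{RSO}}=\max_{\mathbf x\in\mathcal X}F_\alpha(\mathbf x)$ is its relaxation; $\mathbf z^*,\mathbf x^*$ denote their optimizers. *)

theory Defs
  imports "HOL-Analysis.Analysis"
begin

definition assoc_frac :: "'u set \<Rightarrow> 'b set \<Rightarrow> ('u \<Rightarrow> 'b \<Rightarrow> real) set" where
  "assoc_frac U B = {w. (\<forall>u\<in>U. \<forall>b\<in>B. w u b \<ge> 0) \<and> (\<forall>u\<in>U. (\<Sum>b\<in>B. w u b) = 1)
      \<and> (\<forall>u b. u \<notin> U \<or> b \<notin> B \<longrightarrow> w u b = 0)}"

definition assoc_int :: "'u set \<Rightarrow> 'b set \<Rightarrow> ('u \<Rightarrow> 'b \<Rightarrow> real) set" where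
  "assoc_int U B = {w. w \<in> assoc_frac U B \<and> (\<forall>u\<in>U. \<forall>b\<in>B. w u b \<in> \<int>)}"

definition F0 :: "'u set \<Rightarrow> 'b set \<Rightarrow> ('u \<Rightarrow> 'b \<Rightarrow> real) \<Rightarrow> ('u \<Rightarrow> 'b \<Rightarrow> real) \<Rightarrow> real" where
  "F0 U B r w = (\<Sum>b\<in>B. MAX u\<in>U. r u b * w u b)"

definition F1 :: "'u set \<Rightarrow> 'b set \<Rightarrow> ('u \<Rightarrow> 'b \<Rightarrow> real) \<Rightarrow> ('u \<Rightarrow> 'b \<Rightarrow> real) \<Rightarrow> real" where
  "F1 U B r w = (\<Sum>u\<in>U. \<Sum>b\<in>B. w u b * (ln (r u b) - ln (1 + (\<Sum>v\<in>U - {u}. w v b))))"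

definition Fgen :: "real \<Rightarrow> 'u set \<Rightarrow> 'b set \<Rightarrow> ('u \<Rightarrow> 'b \<Rightarrow> real) \<Rightarrow> ('u \<Rightarrow> 'b \<Rightarrow> real) \<Rightarrow> real" where
  "Fgen \<alpha> U B r w = 1 / (1 - \<alpha>) * (\<Sum>u\<in>U. \<Sum>b\<in>B. r u b powr (1 - \<alpha>) * w u b *
      (1 + (\<Sum>v\<in>U - {u}. (r v b / r u b) powr ((1 - \<alpha>) / \<alpha>) * w v b)) powr (\<alpha> - 1))"

definition Falpha :: "real \<Rightarrow> 'u set \<Rightarrow> 'b set \<Rightarrow> ('u \<Rightarrow> 'b \<Rightarrow> real) \<Rightarrow> ('u \<Rightarrow> 'b \<Rightarrow> real) \<Rightarrow> real" where
  "Falpha \<alpha> U B r w = (if \<alpha> = 0 then F0 U B r w else if \<alpha> = 1 then F1 U B r w else Fgen \<alpha> U B r w)"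

end

theory Submission
  imports Defs
begin

definition colG :: "'u set \<Rightarrow> ('u \<Rightarrow> real) \<Rightarrow> ('u \<Rightarrow> real) \<Rightarrow> ('u \<Rightarrow> 'u \<Rightarrow> real) \<Rightarrow> (real \<Rightarrow> real) \<Rightarrow> ('u \<Rightarrow> real) \<Rightarrow> real" where
 "colG U L a k \<phi> c = (\<Sum>v\<in>U. c v * L v + a v * c v * \<phi> (1 + (\<Sum>v'\<in>U-{v}. k v v' * c v')))"

definition chord :: "'u set \<Rightarrow> (('u\<Rightarrow>real) \<Rightarrow> real) \<Rightarrow> bool" where
 "chord U H \<longleftrightarrow> (\<forall>c u t. (\<forall>v\<in>U. 0 \<le> c v) \<longrightarrow> u\<in>U \<longrightarrow> 0\<le>t \<longrightarrow> t\<le>1 \<longrightarrow>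
     H (c(u:=t)) \<le> (1-t)*H (c(u:=0)) + t*H (c(u:=1)))"

lemma powr_conv:
  assumes "\<alpha> \<le> 2" "\<alpha> \<noteq> 1"
  shows "convex_on {0<..} (\<lambda>x::real. x powr (\<alpha>-1) / (1-\<alpha>))"
proof (rule f''_ge0_imp_convex[where f' = "\<lambda>x. - (x powr (\<alpha>-2))" and f'' = "\<lambda>x. (2-\<alpha>) * x powr (\<alpha>-3)"])
  fix x :: real assume x: "x \<in> {0<..}"
  then have xp: "x > 0" by simp
  have "((\<lambda>x. x powr (\<alpha>-1) / (1-\<alpha>)) has_real_derivative ((\<alpha>-1) * x powr (\<alpha>-1-1)) / (1-\<alpha>)) (at x)"
    by (rule DERIV_cdivide[OF has_real_derivative_powr[OF xp]])
  moreover have "((\<alpha>-1) * x powr (\<alpha>-1-1)) / (1-\<alpha>) = - (x powr (\<alpha>-2))"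
    using assms(2) by (simp add: field_simps)
  ultimately show "((\<lambda>x. x powr (\<alpha>-1) / (1-\<alpha>)) has_real_derivative - (x powr (\<alpha>-2))) (at x)"
    by simp
  have "((\<lambda>x. - (x powr (\<alpha>-2))) has_real_derivative - ((\<alpha>-2) * x powr (\<alpha>-2-1))) (at x)"
    by (rule DERIV_minus[OF has_real_derivative_powr[OF xp]])
  moreover have "- ((\<alpha>-2) * x powr (\<alpha>-2-1)) = (2-\<alpha>) * x powr (\<alpha>-3)"
    by (simp add: algebra_simps)
  ultimately show "((\<lambda>x. - (x powr (\<alpha>-2))) has_real_derivative (2-\<alpha>) * x powr (\<alpha>-3)) (at x)"
    by simp
  show "0 \<le> (2-\<alpha>) * x powr (\<alpha>-3)" using assms by simp
qed simp

lemma colG_chord: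
  assumes fin: "finite U" and a: "\<And>v. v \<in> U \<Longrightarrow> a v \<ge> 0" and k: "\<And>v v'. v \<in> U \<Longrightarrow> v' \<in> U \<Longrightarrow> k v v' \<ge> 0"
    and cv: "convex_on {0<..} \<phi>"
  shows "chord U (colG U L a k \<phi>)"
  unfolding chord_def
proof (intro allI impI)
  fix c :: "'a \<Rightarrow> real" and u and t :: real
  assume c: "\<forall>v\<in>U. 0 \<le> c v" and u: "u \<in> U" and t0: "0 \<le> t" and t1: "t \<le> 1"
  define T where "T = (\<lambda>v (c::'a\<Rightarrow>real). c v * L v + a v * c v * \<phi> (1 + (\<Sum>v'\<in>U-{v}. k v v' * c v')))"
  have trm: "T v (c(u:=t)) \<le> (1-t) * T v (c(u:=0)) + t * T v (c(u:=1))" if v: "v \<in> U" for v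
  proof (cases "v = u")
    case True
    have S: "(\<Sum>v'\<in>U-{u}. k u v' * (c(u:=s)) v') = (\<Sum>v'\<in>U-{u}. k u v' * c v')" for s
      by (rule sum.cong) auto
    show ?thesis unfolding T_def True S by (simp add: algebra_simps)
  next
    case False
    define S' where "S' = (\<Sum>v'\<in>U-{v}-{u}. k v v' * c v')"
    have S'0: "S' \<ge> 0" unfolding S'_def using c k v by (intro sum_nonneg) auto
    have S: "(\<Sum>v'\<in>U-{v}. k v v' * (c(u:=s)) v') = k v u * s + S'" for s
    proof -
      have "(\<Sum>v'\<in>U-{v}. k v v' * (c(u:=s)) v') = k v u * (c(u:=s)) u + (\<Sum>v'\<in>U-{v}-{u}. k v v' * (c(u:=s)) v')"
        using fin u False by (subst sum.remove[of _ u]) auto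
      also have "(\<Sum>v'\<in>U-{v}-{u}. k v v' * (c(u:=s)) v') = S'" unfolding S'_def by (rule sum.cong) auto
      finally show ?thesis by simp
    qed
    have kk: "k v u \<ge> 0" using k v u by auto
    have A: "1 + S' \<in> {0<..}" "1 + S' + k v u \<in> {0<..}" using S'0 kk by auto
    have "\<phi> ((1 - t) *\<^sub>R (1 + S') + t *\<^sub>R (1 + S' + k v u)) \<le> (1-t) * \<phi> (1+S') + t * \<phi> (1 + S' + k v u)"
      by (rule convex_onD[OF cv t0 t1 A])
    moreover have "(1 - t) *\<^sub>R (1 + S') + t *\<^sub>R (1 + S' + k v u) = 1 + (k v u * t + S')"
      by (simp add: algebra_simps)
    ultimately have ph: "\<phi> (1 + (k v u * t + S')) \<le> (1-t) * \<phi> (1+S') + t * \<phi> (1 + S' + k v u)" by simp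
    have ac: "a v * c v \<ge> 0" using a c v by simp
    have "a v * c v * \<phi> (1 + (k v u * t + S')) \<le> a v * c v * ((1-t) * \<phi> (1+S') + t * \<phi> (1 + S' + k v u))"
      using mult_left_mono[OF ph ac] .
    then show ?thesis unfolding T_def S using False
      by (simp add: algebra_simps)
  qed
  have colG_T: "colG U L a k \<phi> c' = (\<Sum>v\<in>U. T v c')" for c' by (simp add: colG_def T_def)
  have "colG U L a k \<phi> (c(u:=t)) = (\<Sum>v\<in>U. T v (c(u:=t)))" by (rule colG_T)
  also have "\<dots> \<le> (\<Sum>v\<in>U. (1-t) * T v (c(u:=0)) + t * T v (c(u:=1)))"
    by (rule sum_mono) (rule trm)
  also have "\<dots> = (1-t) * colG U L a k \<phi> (c(u:=0)) + t * colG U L a k \<phi> (c(u:=1))"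
    by (simp only: colG_T sum.distrib sum_distrib_left)
  finally show "colG U L a k \<phi> (c(u:=t)) \<le> (1-t) * colG U L a k \<phi> (c(u:=0)) + t * colG U L a k \<phi> (c(u:=1))" .
qed

lemma max_chord:
  assumes fin: "finite U" and ne: "U \<noteq> {}" and r: "\<And>v. v \<in> U \<Longrightarrow> \<rho> v \<ge> 0"
  shows "chord U (\<lambda>c. MAX v\<in>U. \<rho> v * c v)"
  unfolding chord_def
proof (intro allI impI)
  fix c :: "'a \<Rightarrow> real" and u and t :: real
  assume c: "\<forall>v\<in>U. 0 \<le> c v" and u: "u \<in> U" and t0: "0 \<le> t" and t1: "t \<le> 1"
  let ?M = "\<lambda>c. MAX v\<in>U. \<rho> v * c v"
  have ge: "\<rho> v * c' v \<le> ?M c'" if "v \<in> U" for v c'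
    using fin that by (intro Max_ge) auto
  have M0: "?M (c(u:=0)) \<ge> 0" using ge[OF u, of "c(u:=0)"] by simp
  show "?M (c(u:=t)) \<le> (1-t) * ?M (c(u:=0)) + t * ?M (c(u:=1))"
  proof (rule Max.boundedI)
    show "finite ((\<lambda>v. \<rho> v * (c(u:=t)) v) ` U)" using fin by simp
    show "(\<lambda>v. \<rho> v * (c(u:=t)) v) ` U \<noteq> {}" using ne by simp
    fix y assume "y \<in> (\<lambda>v. \<rho> v * (c(u:=t)) v) ` U"
    then obtain v where v: "v \<in> U" and y: "y = \<rho> v * (c(u:=t)) v" by auto
    show "y \<le> (1-t) * ?M (c(u:=0)) + t * ?M (c(u:=1))"
    proof (cases "v = u")
      case True
      have "t * (\<rho> u * 1) \<le> t * ?M (c(u:=1))" using ge[OF u, of "c(u:=1)"] t0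
        by (intro mult_left_mono) auto
      moreover have "0 \<le> (1-t) * ?M (c(u:=0))" using M0 t1 by simp
      moreover have "y = t * (\<rho> u * 1)" using y True by simp
      ultimately show ?thesis by linarith
    next
      case False
      have "(1-t) * (\<rho> v * c v) \<le> (1-t) * ?M (c(u:=0))" using ge[OF v, of "c(u:=0)"] t1 False
        by (intro mult_left_mono) auto
      moreover have "t * (\<rho> v * c v) \<le> t * ?M (c(u:=1))" using ge[OF v, of "c(u:=1)"] t0 False
        by (intro mult_left_mono) auto
      ultimately show ?thesis using y False by (simp add: algebra_simps)
    qed
  qed
qed


lemma row_replace:
  fixes F :: "('u \<Rightarrow> 'b \<Rightarrow> real) \<Rightarrow> real" and H :: "'b \<Rightarrow> ('u \<Rightarrow> real) \<Rightarrow> real"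
  assumes finB: "finite B" and neB: "B \<noteq> {}"
    and dec: "\<And>w. F w = (\<Sum>b\<in>B. H b (\<lambda>v. w v b))"
    and ch: "\<And>b. b \<in> B \<Longrightarrow> chord U (H b)"
    and x: "x \<in> assoc_frac U B" and u: "u \<in> U"
  shows "\<exists>x'\<in>assoc_frac U B. F x \<le> F x' \<and> (\<forall>b\<in>B. x' u b \<in> \<int>) \<and> (\<forall>v. v \<noteq> u \<longrightarrow> x' v = x v)"
proof -
  have x0: "\<And>v b. v \<in> U \<Longrightarrow> b \<in> B \<Longrightarrow> x v b \<ge> 0" and xs: "\<And>v. v \<in> U \<Longrightarrow> (\<Sum>b\<in>B. x v b) = 1"
    and xz: "\<And>v b. v \<notin> U \<or> b \<notin> B \<Longrightarrow> x v b = 0"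
    using x unfolding assoc_frac_def by auto
  define g where "g = (\<lambda>b t. H b ((\<lambda>v. x v b)(u:=t)))"
  define d where "d = (\<lambda>b. g b 1 - g b 0)"
  have "Max (d ` B) \<in> d ` B" using finB neB by (intro Max_in) auto
  then obtain b0 where b0: "b0 \<in> B" "d b0 = Max (d ` B)" by auto
  have dle: "d b \<le> d b0" if "b \<in> B" for b using b0 finB that by (simp add: Max_ge)
  define x' where "x' = x(u := (\<lambda>b. if b = b0 then 1 else 0))"
  have x'_in: "x' \<in> assoc_frac U B"
    unfolding assoc_frac_def
  proof (intro CollectI conjI ballI allI impI)
    show "0 \<le> x' v b" if "v \<in> U" "b \<in> B" for v b using x0 that by (auto simp: x'_def)
    show "(\<Sum>b\<in>B. x' v b) = 1" if "v \<in> U" for v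
      using xs[OF that] b0 finB by (auto simp: x'_def)
    show "x' v b = 0" if "v \<notin> U \<or> b \<notin> B" for v b
      using that xz u b0 by (auto simp: x'_def)
  qed
  have Fx: "F x = (\<Sum>b\<in>B. g b (x u b))"
  proof -
    have "(\<lambda>v. x v b)(u := x u b) = (\<lambda>v. x v b)" for b by (simp add: fun_eq_iff)
    then show ?thesis unfolding dec g_def by (simp only:)
  qed
  have Fx': "F x' = (\<Sum>b\<in>B. g b (if b = b0 then 1 else 0))"
  proof -
    have "(\<lambda>v. x' v b) = (\<lambda>v. x v b)(u := (if b = b0 then 1 else 0))" for b by (simp add: x'_def fun_eq_iff)
    then show ?thesis unfolding dec g_def by (simp only:)
  qed
  have xu1: "x u b \<le> 1" if "b \<in> B" for b
  proof -
    have "x u b \<le> (\<Sum>b\<in>B. x u b)" using that finB x0[OF u] by (intro member_le_sum) auto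
    then show ?thesis using xs[OF u] by simp
  qed
  have gch: "g b (x u b) \<le> (1 - x u b) * g b 0 + x u b * g b 1" if b: "b \<in> B" for b
  proof -
    have "\<forall>v\<in>U. 0 \<le> x v b" using x0 b by auto
    moreover have "\<forall>c u t. (\<forall>v\<in>U. 0 \<le> c v) \<longrightarrow> u\<in>U \<longrightarrow> 0\<le>t \<longrightarrow> t\<le>1 \<longrightarrow> H b (c(u:=t)) \<le> (1-t)*H b (c(u:=0)) + t*H b (c(u:=1))"
      using ch[OF b] unfolding chord_def .
    note i = spec[OF spec[OF spec[OF this, of "\<lambda>v. x v b"], of u], of "x u b"]
    ultimately show ?thesis unfolding g_def using i u x0[OF u b] xu1[OF b] by blast
  qed
  have "F x \<le> (\<Sum>b\<in>B. (1 - x u b) * g b 0 + x u b * g b 1)"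
    unfolding Fx by (rule sum_mono) (rule gch)
  also have "\<dots> = (\<Sum>b\<in>B. g b 0) + (\<Sum>b\<in>B. x u b * d b)"
  proof -
    have "(\<Sum>b\<in>B. (1 - x u b) * g b 0 + x u b * g b 1) = (\<Sum>b\<in>B. g b 0 + x u b * d b)"
      by (rule sum.cong) (auto simp: d_def algebra_simps)
    then show ?thesis by (simp only: sum.distrib)
  qed
  also have "(\<Sum>b\<in>B. x u b * d b) \<le> (\<Sum>b\<in>B. x u b * d b0)"
    using x0[OF u] dle by (intro sum_mono mult_left_mono) auto
  also have "(\<Sum>b\<in>B. x u b * d b0) = d b0" using xs[OF u] by (simp add: sum_distrib_right[symmetric])
  also have "(\<Sum>b\<in>B. g b 0) + d b0 = F x'"
  proof -
    have "(\<Sum>b\<in>B. g b (if b = b0 then 1 else 0)) = (\<Sum>b\<in>B. g b 0 + (if b = b0 then d b else 0))"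
      by (intro sum.cong) (auto simp: d_def)
    also have "\<dots> = (\<Sum>b\<in>B. g b 0) + d b0" using finB b0 by (simp add: sum.distrib)
    finally show ?thesis using Fx' by simp
  qed
  finally have "F x \<le> F x'" by simp
  moreover have "\<forall>b\<in>B. x' u b \<in> \<int>" by (simp add: x'_def)
  moreover have "\<forall>v. v \<noteq> u \<longrightarrow> x' v = x v" by (simp add: x'_def)
  ultimately show ?thesis using x'_in by blast
qed

lemma rounding:
  fixes F :: "('u \<Rightarrow> 'b \<Rightarrow> real) \<Rightarrow> real" and H :: "'b \<Rightarrow> ('u \<Rightarrow> real) \<Rightarrow> real"
  assumes finU: "finite U" and finB: "finite B" and neB: "B \<noteq> {}"
    and dec: "\<And>w. F w = (\<Sum>b\<in>B. H b (\<lambda>v. w v b))"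
    and ch: "\<And>b. b \<in> B \<Longrightarrow> chord U (H b)"
    and x: "x \<in> assoc_frac U B"
  shows "\<exists>z\<in>assoc_int U B. F x \<le> F z"
proof -
  have "\<forall>x\<in>assoc_frac U B. (\<forall>u\<in>U-V. \<forall>b\<in>B. x u b \<in> \<int>) \<longrightarrow> (\<exists>z\<in>assoc_int U B. F x \<le> F z)"
    if "finite V" for V
    using that
  proof (induction V rule: finite_induct)
    case empty
    show ?case unfolding assoc_int_def by auto
  next
    case (insert u V)
    show ?case
    proof (intro ballI impI)
      fix x assume x: "x \<in> assoc_frac U B" and int: "\<forall>u'\<in>U - insert u V. \<forall>b\<in>B. x u' b \<in> \<int>"
      show "\<exists>z\<in>assoc_int U B. F x \<le> F z"
      proof (cases "u \<in> U")
        case False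
        then have "\<forall>u'\<in>U - V. \<forall>b\<in>B. x u' b \<in> \<int>" using int by auto
        then show ?thesis using insert.IH x by blast
      next
        case True
        obtain x' where x': "x' \<in> assoc_frac U B" "F x \<le> F x'" "\<forall>b\<in>B. x' u b \<in> \<int>" "\<forall>v. v \<noteq> u \<longrightarrow> x' v = x v"
          using row_replace[OF finB neB dec ch x True] by blast
        have "\<forall>u'\<in>U - V. \<forall>b\<in>B. x' u' b \<in> \<int>" using int x'(3,4) by (metis DiffD1 DiffD2 DiffI insertE)
        then obtain z where "z \<in> assoc_int U B" "F x' \<le> F z" using insert.IH x'(1) by blast
        then show ?thesis using x'(2) by (meson order_trans)
      qed
    qed
  qed
  from this[OF finU] x show ?thesis by auto
qed


lemma decomp:
  fixes U :: "'u set" and B :: "'b set" and r :: "'u \<Rightarrow> 'b \<Rightarrow> real" and \<alpha> :: real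
  assumes finU: "finite U" and neU: "U \<noteq> {}"
    and rpos: "\<And>u b. u \<in> U \<Longrightarrow> b \<in> B \<Longrightarrow> r u b > 0"
    and a0: "0 \<le> \<alpha>" and a2: "\<alpha> \<le> 2"
  shows "\<exists>H. (\<forall>w. Falpha \<alpha> U B r w = (\<Sum>b\<in>B. H b (\<lambda>v. w v b))) \<and> (\<forall>b\<in>B. chord U (H b))"
proof (cases "\<alpha> = 0")
  case True
  show ?thesis
  proof (intro exI[of _ "\<lambda>b c. MAX v\<in>U. r v b * c v"] conjI allI ballI)
    show "Falpha \<alpha> U B r w = (\<Sum>b\<in>B. MAX v\<in>U. r v b * w v b)" for w
      using True by (simp add: Falpha_def F0_def)
    show "chord U (\<lambda>c. MAX v\<in>U. r v b * c v)" if "b \<in> B" for b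
      using rpos that by (intro max_chord finU neU) (simp add: less_imp_le)
  qed
next
  case a_ne0: False
  show ?thesis
  proof (cases "\<alpha> = 1")
    case True
    have cv: "convex_on {0<..} (\<lambda>x::real. - ln x)"
      using ln_concave unfolding concave_on_def .
    show ?thesis
    proof (intro exI[of _ "\<lambda>b. colG U (\<lambda>v. ln (r v b)) (\<lambda>_. 1) (\<lambda>_ _. 1) (\<lambda>x. - ln x)"] conjI allI ballI)
      show "Falpha \<alpha> U B r w = (\<Sum>b\<in>B. colG U (\<lambda>v. ln (r v b)) (\<lambda>_. 1) (\<lambda>_ _. 1) (\<lambda>x. - ln x) (\<lambda>v. w v b))" for w
        using True unfolding Falpha_def F1_def colG_def
        by (simp, subst sum.swap, intro sum.cong refl) (simp add: algebra_simps)
      show "chord U (colG U (\<lambda>v. ln (r v b)) (\<lambda>_. 1) (\<lambda>_ _. 1) (\<lambda>x. - ln x))" if "b \<in> B" for b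
        by (rule colG_chord[OF finU _ _ cv]; use rpos that in \<open>auto\<close>)
    qed
  next
    case a_ne1: False
    have cv: "convex_on {0<..} (\<lambda>x::real. x powr (\<alpha>-1) / (1-\<alpha>))"
      by (rule powr_conv[OF a2 a_ne1])
    have ne: "1 - \<alpha> \<noteq> 0" using a_ne1 by simp
    show ?thesis
    proof (intro exI[of _ "\<lambda>b. colG U (\<lambda>_. 0) (\<lambda>v. r v b powr (1-\<alpha>)) (\<lambda>v v'. (r v' b / r v b) powr ((1-\<alpha>)/\<alpha>)) (\<lambda>x. x powr (\<alpha>-1) / (1-\<alpha>))"] conjI allI ballI)
      show "Falpha \<alpha> U B r w = (\<Sum>b\<in>B. colG U (\<lambda>_. 0) (\<lambda>v. r v b powr (1-\<alpha>)) (\<lambda>v v'. (r v' b / r v b) powr ((1-\<alpha>)/\<alpha>)) (\<lambda>x. x powr (\<alpha>-1) / (1-\<alpha>)) (\<lambda>v. w v b))" for w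
        using a_ne0 a_ne1 unfolding Falpha_def Fgen_def colG_def
        by (simp add: sum_distrib_left, subst sum.swap, intro sum.cong refl)
      show "chord U (colG U (\<lambda>_. 0) (\<lambda>v. r v b powr (1-\<alpha>)) (\<lambda>v v'. (r v' b / r v b) powr ((1-\<alpha>)/\<alpha>)) (\<lambda>x. x powr (\<alpha>-1) / (1-\<alpha>)))" if "b \<in> B" for b
        by (rule colG_chord[OF finU _ _ cv]; use rpos that in \<open>auto\<close>)
    qed
  qed
qed

lemma frac_le1:
  assumes "finite B" "w \<in> assoc_frac U B" "u \<in> U" "b \<in> B"
  shows "w u b \<le> 1" "0 \<le> w u b"
proof -
  have x0: "\<And>v b. v \<in> U \<Longrightarrow> b \<in> B \<Longrightarrow> w v b \<ge> 0" and xs: "\<And>v. v \<in> U \<Longrightarrow> (\<Sum>b\<in>B. w v b) = 1"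
    using assms(2) unfolding assoc_frac_def by auto
  have "w u b \<le> (\<Sum>b\<in>B. w u b)" using assms x0 by (intro member_le_sum) auto
  then show "w u b \<le> 1" using xs[OF assms(3)] by simp
  show "0 \<le> w u b" using x0 assms by simp
qed

lemma int01:
  assumes "(x::real) \<in> \<int>" "0 \<le> x" "x \<le> 1" shows "x \<in> {0,1}"
proof -
  obtain n where n: "x = of_int n" using assms(1) Ints_cases by blast
  have "0 \<le> n" "n \<le> 1" using assms n by auto
  hence "n = 0 \<or> n = 1" by auto
  thus ?thesis using n by auto
qed

lemma finite_int:
  assumes "finite U" "finite B"
  shows "finite (assoc_int U B)"
proof -
  define m where "m = (\<lambda>w::'a \<Rightarrow> 'b \<Rightarrow> real. restrict (\<lambda>p. w (fst p) (snd p)) (U \<times> B))"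
  have inj: "inj_on m (assoc_int U B)"
  proof (rule inj_onI)
    fix w1 w2 assume w1: "w1 \<in> assoc_int U B" and w2: "w2 \<in> assoc_int U B" and eq: "m w1 = m w2"
    show "w1 = w2"
    proof (intro ext)
      fix u b
      show "w1 u b = w2 u b"
      proof (cases "u \<in> U \<and> b \<in> B")
        case True
        then show ?thesis using fun_cong[OF eq, of "(u,b)"] by (simp add: m_def)
      next
        case False
        then show ?thesis using w1 w2 unfolding assoc_int_def assoc_frac_def by auto
      qed
    qed
  qed
  have sub: "m ` assoc_int U B \<subseteq> PiE (U \<times> B) (\<lambda>_. {0,1})"
  proof
    fix y assume "y \<in> m ` assoc_int U B"
    then obtain w where w: "w \<in> assoc_int U B" and y: "y = m w" by auto
    have wf: "w \<in> assoc_frac U B" and wi: "\<forall>u\<in>U. \<forall>b\<in>B. w u b \<in> \<int>" using w unfolding assoc_int_def by auto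
    show "y \<in> PiE (U \<times> B) (\<lambda>_. {0,1})"
      unfolding y m_def using int01 wi frac_le1[OF assms(2) wf] by (auto simp: PiE_iff)
  qed
  show ?thesis
    by (rule inj_on_finite[OF inj sub]) (intro finite_PiE, use assms in auto)
qed

theorem theorem1:
  fixes U :: "'u set" and B :: "'b set" and r :: "'u \<Rightarrow> 'b \<Rightarrow> real" and \<alpha> :: real
  assumes "finite U" "U \<noteq> {}" "finite B" "B \<noteq> {}"
    and "\<And>u b. u \<in> U \<Longrightarrow> b \<in> B \<Longrightarrow> r u b > 0"
    and "0 \<le> \<alpha>" "\<alpha> \<le> 2"
  shows "(MAX z \<in> assoc_int U B. Falpha \<alpha> U B r z) = (SUP x \<in> assoc_frac U B. Falpha \<alpha> U B r x)
     \<and> (\<exists>x \<in> assoc_frac U B. \<forall>y \<in> assoc_frac U B. Falpha \<alpha> U B r y \<le> Falpha \<alpha> U B r x)"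
proof -
  let ?F = "Falpha \<alpha> U B r"
  obtain H where decH: "\<forall>w. ?F w = (\<Sum>b\<in>B. H b (\<lambda>v. w v b))" and chH: "\<forall>b\<in>B. chord U (H b)"
  proof -
    have "\<exists>H. (\<forall>w. ?F w = (\<Sum>b\<in>B. H b (\<lambda>v. w v b))) \<and> (\<forall>b\<in>B. chord U (H b))"
      by (rule decomp) (use assms in auto)
    then show ?thesis using that by blast
  qed
  have dec: "\<And>w. ?F w = (\<Sum>b\<in>B. H b (\<lambda>v. w v b))" using decH by simp
  have ch: "\<And>b. b \<in> B \<Longrightarrow> chord U (H b)" using chH by simp
  obtain b0 where b0: "b0 \<in> B" using assms(4) by blast
  define z1 where "z1 = (\<lambda>u b. if u \<in> U \<and> b = b0 then 1 else (0::real))"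
  have z1: "z1 \<in> assoc_int U B"
    unfolding assoc_int_def assoc_frac_def
  proof (intro CollectI conjI ballI allI impI)
    show "0 \<le> z1 u b" for u b by (simp add: z1_def)
    show "z1 u b \<in> \<int>" for u b by (simp add: z1_def)
    show "z1 u b = 0" if "u \<notin> U \<or> b \<notin> B" for u b using that b0 by (auto simp: z1_def)
    show "(\<Sum>b\<in>B. z1 u b) = 1" if "u \<in> U" for u
    proof -
      have "(\<Sum>b\<in>B. z1 u b) = (\<Sum>b\<in>B. if b = b0 then 1 else 0)"
        by (rule sum.cong) (use that in \<open>auto simp: z1_def\<close>)
      also have "\<dots> = 1" using b0 assms(3) by simp
      finally show ?thesis .
    qed
  qed
  have fin: "finite (assoc_int U B)" by (rule finite_int[OF assms(1,3)])
  have ne: "assoc_int U B \<noteq> {}" using z1 by blast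
  define M where "M = (MAX z \<in> assoc_int U B. ?F z)"
  have "M \<in> ?F ` assoc_int U B" unfolding M_def using fin ne by (intro Max_in) auto
  then obtain z0 where z0: "z0 \<in> assoc_int U B" "?F z0 = M" by auto
  have sub: "assoc_int U B \<subseteq> assoc_frac U B" unfolding assoc_int_def by auto
  have bound: "?F y \<le> M" if yin: "y \<in> assoc_frac U B" for y
  proof -
    obtain z where "z \<in> assoc_int U B" "?F y \<le> ?F z"
      using rounding[OF assms(1,3,4) dec ch yin] by blast
    moreover have "?F z \<le> M" unfolding M_def using fin \<open>z \<in> assoc_int U B\<close> by (intro Max_ge) auto
    ultimately show ?thesis by linarith
  qed
  have z0f: "z0 \<in> assoc_frac U B" using z0(1) sub by blast
  have "(SUP x \<in> assoc_frac U B. ?F x) = M"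
  proof (rule cSup_eq_maximum)
    show "M \<in> ?F ` assoc_frac U B" using z0f z0(2) by (metis image_eqI)
    show "y \<le> M" if "y \<in> ?F ` assoc_frac U B" for y using that bound by blast
  qed
  moreover have "\<exists>x \<in> assoc_frac U B. \<forall>y \<in> assoc_frac U B. ?F y \<le> ?F x"
    using z0f z0(2) bound by metis
  ultimately show ?thesis unfolding M_def by simp
qed

end
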